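(* The set of singular points of the collinearity variety $\tilde{C}_B=0$ remains invariant under Euclidean motions, i.e. under maps $(\mathbf{k}'_1,\dots,\mathbf{k}'_6)\mapsto(\mathbf{R}\mathbf{k}'_1+\mathbf{t},\dots,\mathbf{R}\mathbf{k}'_6+\mathbf{t})$ with $\mathbf{R}\in SO(2)$ and $\mathbf{t}\in\mathbb{R}^2$. Moreover, a point of $\tilde{C}_B=0$ is a singular point if and only if $\mathbf{k}'_1=\mathbf{k}'_2=\mathbf{k}'_3$.
   Context: A configuration is $K'=(\mathbf{k}'_1,\dots,\mathbf{k}'_6)$ with $\mathbf{k}'_i=(c_i,d_i)^T\in\mathbb{R}^2$, viewed as a point of $\mathbb{R}^{12}$. The given platform has anchor points (in its moving frame) $(0,0),(x_5,0),(x_6,y_6)$ with real design parameters $x_5\neq0$, $x_6$, $y_6$. Define $C_B=\det\begin{pmatrix}1&1&1\\ c_1&c_2&c_3\\ d_1&d_2&d_3\end{pmatrix}$, $E_P=\|\mathbf{k}'_5-\mathbf{k}'_4\|^2-x_5^2$, $F_3=(c_5-c_4)x_6+(d_4-d_5)y_6+(c_4-c_6)x_5$, $F_4=(d_5-d_4)x_6+(c_5-c_4)y_6+(d_4-d_6)x_5$. The variety $\tilde{C}_B=0$ is the common zero set of $C_B,E_P,F_3,F_4$ in $\mathbb{R}^{12}$ (configurations with collinear base points whose platform is a Euclidean image of the given platform). A singular point of $\tilde{C}_B=0$ is a point of it at which the gradients of $C_B,E_P,F_3,F_4$ with respect to $c_1,\dots,c_6,d_1,\dots,d_6$ are linearly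 dependent. *)

theory Defs
  imports "HOL-Analysis.Analysis"
begin

text \<open>A configuration K' = (k'_1,...,k'_6) with k'_i = (c_i,d_i) is an element of
  real^2^6 (isometric to R^12): K $ i $ 1 = c_i, K $ i $ 2 = d_i, for i = 1..6
  (in the numeral type 6 the index 6 is the same element as 0).\<close>

type_synonym config = "real ^ 2 ^ 6"

definition cc :: "config \<Rightarrow> 6 \<Rightarrow> real" where "cc K i = K $ i $ 1"
definition dd :: "config \<Rightarrow> 6 \<Rightarrow> real" where "dd K i = K $ i $ 2"

definition C_B :: "config \<Rightarrow> real" where
  "C_B K = det (vector [vector [1, 1, 1],
                        vector [cc K 1, cc K 2, cc K 3],
                        vector [dd K 1, dd K 2, dd K 3]] :: real ^ 3 ^ 3)"

definition E_P :: "real \<Rightarrow> config \<Rightarrow> real" where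
  "E_P x5 K = (norm (K $ 5 - K $ 4))\<^sup>2 - x5\<^sup>2"

definition F_3 :: "real \<Rightarrow> real \<Rightarrow> real \<Rightarrow> config \<Rightarrow> real" where
  "F_3 x5 x6 y6 K = (cc K 5 - cc K 4) * x6 + (dd K 4 - dd K 5) * y6 + (cc K 4 - cc K 6) * x5"

definition F_4 :: "real \<Rightarrow> real \<Rightarrow> real \<Rightarrow> config \<Rightarrow> real" where
  "F_4 x5 x6 y6 K = (dd K 5 - dd K 4) * x6 + (cc K 5 - cc K 4) * y6 + (dd K 4 - dd K 6) * x5"

definition variety :: "real \<Rightarrow> real \<Rightarrow> real \<Rightarrow> config set" where
  "variety x5 x6 y6 = {K. C_B K = 0 \<and> E_P x5 K = 0 \<and> F_3 x5 x6 y6 K = 0 \<and> F_4 x5 x6 y6 K = 0}"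

definition singular_points :: "real \<Rightarrow> real \<Rightarrow> real \<Rightarrow> config set" where
  "singular_points x5 x6 y6 = {K. K \<in> variety x5 x6 y6 \<and>
     (\<exists>g1 g2 g3 g4 :: config.
        GDERIV C_B K :> g1 \<and> GDERIV (E_P x5) K :> g2 \<and>
        GDERIV (F_3 x5 x6 y6) K :> g3 \<and> GDERIV (F_4 x5 x6 y6) K :> g4 \<and>
        (\<exists>a1 a2 a3 a4 :: real. (a1, a2, a3, a4) \<noteq> (0, 0, 0, 0) \<and>
           a1 *\<^sub>R g1 + a2 *\<^sub>R g2 + a3 *\<^sub>R g3 + a4 *\<^sub>R g4 = 0))}"

definition SO2 :: "(real ^ 2 ^ 2) set" where
  "SO2 = {R. orthogonal_matrix R \<and> det R = 1}"

definition euclid_motion :: "real ^ 2 ^ 2 \<Rightarrow> real ^ 2 \<Rightarrow> config \<Rightarrow> config" where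
  "euclid_motion R t K = (\<chi> i. R *v (K $ i) + t)"

end

theory Submission
  imports Defs
begin

abbreviation ee :: "6 \<Rightarrow> 2 \<Rightarrow> config" where "ee i j \<equiv> axis i (axis j 1)"

lemma hd_nth: "((\<lambda>K::config. K$i$j) has_derivative (\<lambda>h. h$i$j)) F"
proof -
  have "bounded_linear (\<lambda>K::config. K$i$j)"
    using bounded_linear_compose[OF bounded_linear_vec_nth[of j] bounded_linear_vec_nth[of i]] by simp
  thus ?thesis by (rule bounded_linear_imp_has_derivative)
qed

lemma inner_ee: "inner h (ee i j) = h$i$j"
  by (simp add: inner_axis)

lemma C_B_eq: "C_B K = K$2$1*K$3$2 - K$3$1*K$2$2 - K$1$1*K$3$2 + K$3$1*K$1$2 + K$1$1*K$2$2 - K$2$1*K$1$2"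
  by (simp add: C_B_def det_3 cc_def dd_def vector_def algebra_simps)

lemma E_P_eq: "E_P x5 K = (K$5$1 - K$4$1)^2 + (K$5$2 - K$4$2)^2 - x5^2"
  unfolding E_P_def power2_norm_eq_inner by (simp add: inner_vec_def sum_2 power2_eq_square)

lemma idx: "(1::6) \<noteq> 2" "(1::6) \<noteq> 3" "(2::6) \<noteq> 3" "(1::6) \<noteq> 4" "(4::6) \<noteq> 5" "(5::6) \<noteq> 6" "(4::6) \<noteq> 6"
  "(1::2) \<noteq> 2" by simp_all


definition GC :: "config \<Rightarrow> config" where
 "GC K = (K$2$2 - K$3$2) *\<^sub>R ee 1 1 + (K$3$2 - K$1$2) *\<^sub>R ee 2 1 + (K$1$2 - K$2$2) *\<^sub>R ee 3 1
   + (K$3$1 - K$2$1) *\<^sub>R ee 1 2 + (K$1$1 - K$3$1) *\<^sub>R ee 2 2 + (K$2$1 - K$1$1) *\<^sub>R ee 3 2"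
definition GE :: "config \<Rightarrow> config" where
 "GE K = (2*(K$5$1-K$4$1)) *\<^sub>R (ee 5 1 - ee 4 1) + (2*(K$5$2-K$4$2)) *\<^sub>R (ee 5 2 - ee 4 2)"
definition G3 :: "real \<Rightarrow> real \<Rightarrow> real \<Rightarrow> config" where
 "G3 x5 x6 y6 = (x5 - x6) *\<^sub>R ee 4 1 + x6 *\<^sub>R ee 5 1 - x5 *\<^sub>R ee 6 1 + y6 *\<^sub>R ee 4 2 - y6 *\<^sub>R ee 5 2"
definition G4 :: "real \<Rightarrow> real \<Rightarrow> real \<Rightarrow> config" where
 "G4 x5 x6 y6 = (x5 - x6) *\<^sub>R ee 4 2 + x6 *\<^sub>R ee 5 2 - x5 *\<^sub>R ee 6 2 - y6 *\<^sub>R ee 4 1 + y6 *\<^sub>R ee 5 1"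

lemma gC: "GDERIV C_B K :> GC K"
proof -
  have e: "C_B = (\<lambda>K. K$2$1*K$3$2 - K$3$1*K$2$2 - K$1$1*K$3$2 + K$3$1*K$1$2 + K$1$1*K$2$2 - K$2$1*K$1$2)"
    by (rule ext, rule C_B_eq)
  show ?thesis unfolding gderiv_def e
    by (auto intro!: derivative_eq_intros hd_nth simp: GC_def inner_add_right inner_diff_right inner_ee algebra_simps)
qed

lemma gE: "GDERIV (E_P x5) K :> GE K"
proof -
  have e: "E_P x5 = (\<lambda>K. (K$5$1 - K$4$1)^2 + (K$5$2 - K$4$2)^2 - x5^2)"
    by (rule ext, rule E_P_eq)
  show ?thesis unfolding gderiv_def e
    by (auto intro!: derivative_eq_intros hd_nth simp: GE_def inner_add_right inner_diff_right inner_ee algebra_simps)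
qed

lemma g3: "GDERIV (F_3 x5 x6 y6) K :> G3 x5 x6 y6"
  unfolding gderiv_def F_3_def cc_def dd_def
  by (auto intro!: derivative_eq_intros hd_nth simp: G3_def inner_add_right inner_diff_right inner_ee algebra_simps)

lemma g4: "GDERIV (F_4 x5 x6 y6) K :> G4 x5 x6 y6"
  unfolding gderiv_def F_4_def cc_def dd_def
  by (auto intro!: derivative_eq_intros hd_nth simp: G4_def inner_add_right inner_diff_right inner_ee algebra_simps)

lemma gderiv_uniq: "GDERIV f K :> g \<Longrightarrow> GDERIV f K :> g' \<Longrightarrow> g = (g'::config)"
  unfolding gderiv_def
proof -
  assume a: "(f has_derivative (\<lambda>h. inner h g)) (at K)" "(f has_derivative (\<lambda>h. inner h g')) (at K)"
  have "(\<lambda>h. inner h g) = (\<lambda>h. inner h g')" using has_derivative_unique[OF a] .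
  hence "inner (g - g') g = inner (g - g') g'" by metis
  hence "inner (g - g') (g - g') = 0" by (simp add: inner_diff_right)
  thus "g = g'" by simp
qed




lemma sing_alt: "K \<in> singular_points x5 x6 y6 \<longleftrightarrow> K \<in> variety x5 x6 y6 \<and>
   (\<exists>a1 a2 a3 a4 :: real. (a1, a2, a3, a4) \<noteq> (0, 0, 0, 0) \<and>
      a1 *\<^sub>R GC K + a2 *\<^sub>R GE K + a3 *\<^sub>R G3 x5 x6 y6 + a4 *\<^sub>R G4 x5 x6 y6 = 0)"
proof
  assume "K \<in> singular_points x5 x6 y6"
  then obtain g1 g2 g3 g4 where v: "K \<in> variety x5 x6 y6" and d: "GDERIV C_B K :> g1" "GDERIV (E_P x5) K :> g2"
        "GDERIV (F_3 x5 x6 y6) K :> g3" "GDERIV (F_4 x5 x6 y6) K :> g4" and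
     ex: "\<exists>a1 a2 a3 a4 :: real. (a1, a2, a3, a4) \<noteq> (0, 0, 0, 0) \<and>
           a1 *\<^sub>R g1 + a2 *\<^sub>R g2 + a3 *\<^sub>R g3 + a4 *\<^sub>R g4 = 0"
    unfolding singular_points_def by blast
  have "g1 = GC K" by (rule gderiv_uniq[OF d(1) gC])
  moreover have "g2 = GE K" by (rule gderiv_uniq[OF d(2) gE])
  moreover have "g3 = G3 x5 x6 y6" by (rule gderiv_uniq[OF d(3) g3])
  moreover have "g4 = G4 x5 x6 y6" by (rule gderiv_uniq[OF d(4) g4])
  ultimately show "K \<in> variety x5 x6 y6 \<and>
   (\<exists>a1 a2 a3 a4 :: real. (a1, a2, a3, a4) \<noteq> (0, 0, 0, 0) \<and>
      a1 *\<^sub>R GC K + a2 *\<^sub>R GE K + a3 *\<^sub>R G3 x5 x6 y6 + a4 *\<^sub>R G4 x5 x6 y6 = 0)" using v ex by blast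
next
  assume "K \<in> variety x5 x6 y6 \<and>
   (\<exists>a1 a2 a3 a4 :: real. (a1, a2, a3, a4) \<noteq> (0, 0, 0, 0) \<and>
      a1 *\<^sub>R GC K + a2 *\<^sub>R GE K + a3 *\<^sub>R G3 x5 x6 y6 + a4 *\<^sub>R G4 x5 x6 y6 = 0)"
  then show "K \<in> singular_points x5 x6 y6"
    unfolding singular_points_def using gC[of K] gE[of x5 K] g3[of x5 x6 y6 K] g4[of x5 x6 y6 K] by blast
qed

lemma sing_iff:
  assumes x5: "x5 \<noteq> 0" and V: "K \<in> variety x5 x6 y6"
  shows "K \<in> singular_points x5 x6 y6 \<longleftrightarrow> (K $ 1 = K $ 2 \<and> K $ 2 = K $ 3)"
proof
  assume "K \<in> singular_points x5 x6 y6"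
  then obtain a1 a2 a3 a4 :: real where nz: "(a1, a2, a3, a4) \<noteq> (0, 0, 0, 0)" and
    S: "a1 *\<^sub>R GC K + a2 *\<^sub>R GE K + a3 *\<^sub>R G3 x5 x6 y6 + a4 *\<^sub>R G4 x5 x6 y6 = 0"
    unfolding sing_alt by blast
  define SS where "SS = a1 *\<^sub>R GC K + a2 *\<^sub>R GE K + a3 *\<^sub>R G3 x5 x6 y6 + a4 *\<^sub>R G4 x5 x6 y6"
  have c: "SS $ i $ j = 0" for i j using S unfolding SS_def by simp
  have "SS $ 6 $ 1 = - a3 * x5" unfolding SS_def by (simp add: GC_def GE_def G3_def G4_def axis_def)
  then have a3: "a3 = 0" using c[of 6 1] x5 by simp
  have "SS $ 6 $ 2 = - a4 * x5" unfolding SS_def by (simp add: GC_def GE_def G3_def G4_def axis_def)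
  then have a4: "a4 = 0" using c[of 6 2] x5 by simp
  have "SS $ 5 $ 1 = a2 * (2*(K$5$1-K$4$1)) + a3 * x6 + a4 * y6" unfolding SS_def by (simp add: GC_def GE_def G3_def G4_def axis_def)
  then have e1: "a2 * (K$5$1-K$4$1) = 0" using c[of 5 1] a3 a4 by simp
  have "SS $ 5 $ 2 = a2 * (2*(K$5$2-K$4$2)) + a3 * (-y6) + a4 * x6" unfolding SS_def by (simp add: GC_def GE_def G3_def G4_def axis_def)
  then have e2: "a2 * (K$5$2-K$4$2) = 0" using c[of 5 2] a3 a4 by simp
  have a2: "a2 = 0"
  proof (rule ccontr)
    assume "a2 \<noteq> 0"
    then have "K$5$1 = K$4$1" "K$5$2 = K$4$2" using e1 e2 by auto
    then have "E_P x5 K = - (x5^2)" by (simp add: E_P_eq)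
    moreover have "E_P x5 K = 0" using V by (simp add: variety_def)
    ultimately show False using x5 by simp
  qed
  have a1: "a1 \<noteq> 0" using nz a2 a3 a4 by auto
  have "SS $ 1 $ 1 = a1 * (K$2$2 - K$3$2)" unfolding SS_def by (simp add: GC_def GE_def G3_def G4_def axis_def a2 a3 a4)
  then have q1: "K$2$2 = K$3$2" using c[of 1 1] a1 by simp
  have "SS $ 2 $ 1 = a1 * (K$3$2 - K$1$2)" unfolding SS_def by (simp add: GC_def GE_def G3_def G4_def axis_def a2 a3 a4)
  then have q2: "K$3$2 = K$1$2" using c[of 2 1] a1 by simp
  have "SS $ 1 $ 2 = a1 * (K$3$1 - K$2$1)" unfolding SS_def by (simp add: GC_def GE_def G3_def G4_def axis_def a2 a3 a4)
  then have q3: "K$3$1 = K$2$1" using c[of 1 2] a1 by simp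
  have "SS $ 2 $ 2 = a1 * (K$1$1 - K$3$1)" unfolding SS_def by (simp add: GC_def GE_def G3_def G4_def axis_def a2 a3 a4)
  then have q4: "K$1$1 = K$3$1" using c[of 2 2] a1 by simp
  show "K $ 1 = K $ 2 \<and> K $ 2 = K $ 3" using q1 q2 q3 q4 by (simp add: vec_eq_iff forall_2)
next
  assume "K $ 1 = K $ 2 \<and> K $ 2 = K $ 3"
  then have "GC K = 0" by (simp add: GC_def)
  then have "1 *\<^sub>R GC K + 0 *\<^sub>R GE K + 0 *\<^sub>R G3 x5 x6 y6 + 0 *\<^sub>R G4 x5 x6 y6 = 0" by simp
  then show "K \<in> singular_points x5 x6 y6" unfolding sing_alt using V
    by (metis one_neq_zero prod.inject)
qed

lemma mcomp: "euclid_motion R t K $ i $ 1 = R$1$1*K$i$1 + R$1$2*K$i$2 + t$1"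
             "euclid_motion R t K $ i $ 2 = R$2$1*K$i$1 + R$2$2*K$i$2 + t$2"
  by (simp_all add: euclid_motion_def matrix_vector_mult_def sum_2)

lemma SO2_entries:
  assumes "R \<in> SO2"
  shows "R$1$2 = - R$2$1" "R$2$2 = R$1$1" "R$1$1^2 + R$2$1^2 = 1"
proof -
  have o: "transpose R ** R = mat 1" and d: "det R = 1" using assms
    by (auto simp: SO2_def orthogonal_matrix_def)
  have e11: "R$1$1*R$1$1 + R$2$1*R$2$1 = 1"
    using arg_cong[OF o, of "\<lambda>M. M$1$1"] by (simp add: matrix_matrix_mult_def sum_2 transpose_def mat_def)
  have e12: "R$1$1*R$1$2 + R$2$1*R$2$2 = 0"
    using arg_cong[OF o, of "\<lambda>M. M$1$2"] by (simp add: matrix_matrix_mult_def sum_2 transpose_def mat_def)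
  have dd: "R$1$1*R$2$2 - R$1$2*R$2$1 = 1" using d by (simp add: det_2)
  have "R$1$2 = R$1$2 * (R$1$1*R$1$1 + R$2$1*R$2$1)" using e11 by simp
  also have "\<dots> = R$1$1 * (R$1$1*R$1$2 + R$2$1*R$2$2) - R$2$1 * (R$1$1*R$2$2 - R$1$2*R$2$1)"
    by (simp add: algebra_simps)
  also have "\<dots> = - R$2$1" using e12 dd by simp
  finally show "R$1$2 = - R$2$1" .
  have "R$2$2 = R$2$2 * (R$1$1*R$1$1 + R$2$1*R$2$1)" using e11 by simp
  also have "\<dots> = R$1$1 * (R$1$1*R$2$2 - R$1$2*R$2$1) + R$2$1 * (R$1$1*R$1$2 + R$2$1*R$2$2)"
    by (simp add: algebra_simps)
  also have "\<dots> = R$1$1" using e12 dd by simp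
  finally show "R$2$2 = R$1$1" .
  show "R$1$1^2 + R$2$1^2 = 1" using e11 by (simp add: power2_eq_square)
qed

lemma variety_motion:
  assumes R: "R \<in> SO2" and V: "K \<in> variety x5 x6 y6"
  shows "euclid_motion R t K \<in> variety x5 x6 y6"
proof -
  note r = SO2_entries[OF R]
  define a where "a = R$1$1"
  define b where "b = R$2$1"
  have m: "euclid_motion R t K $ i $ 1 = a*K$i$1 - b*K$i$2 + t$1"
          "euclid_motion R t K $ i $ 2 = b*K$i$1 + a*K$i$2 + t$2" for i
    using mcomp[of R t K i] r by (simp_all add: a_def b_def)
  have s: "a^2 + b^2 = 1" using r by (simp add: a_def b_def)
  let ?M = "euclid_motion R t K"
  have "C_B ?M = (a^2 + b^2) * C_B K"
    unfolding C_B_eq m by (simp add: algebra_simps power2_eq_square)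
  moreover have "E_P x5 ?M + x5^2 = (a^2 + b^2) * (E_P x5 K + x5^2)"
    unfolding E_P_eq m by (simp add: algebra_simps power2_eq_square)
  moreover have "F_3 x5 x6 y6 ?M = a * F_3 x5 x6 y6 K - b * F_4 x5 x6 y6 K"
    unfolding F_3_def F_4_def cc_def dd_def m by (simp add: algebra_simps)
  moreover have "F_4 x5 x6 y6 ?M = b * F_3 x5 x6 y6 K + a * F_4 x5 x6 y6 K"
    unfolding F_3_def F_4_def cc_def dd_def m by (simp add: algebra_simps)
  ultimately show ?thesis using V s by (simp add: variety_def)
qed

lemma sing_motion:
  assumes x5: "x5 \<noteq> 0" and R: "R \<in> SO2" and K: "K \<in> singular_points x5 x6 y6"
  shows "euclid_motion R t K \<in> singular_points x5 x6 y6"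
proof -
  have V: "K \<in> variety x5 x6 y6" using K by (simp add: singular_points_def)
  have e: "K $ 1 = K $ 2 \<and> K $ 2 = K $ 3" using sing_iff[OF x5 V] K by blast
  have "euclid_motion R t K $ 1 = euclid_motion R t K $ 2 \<and> euclid_motion R t K $ 2 = euclid_motion R t K $ 3"
    using e by (simp add: euclid_motion_def)
  thus ?thesis using sing_iff[OF x5 variety_motion[OF R V]] by blast
qed

theorem theorem10:
  fixes x5 x6 y6 :: real
  assumes "x5 \<noteq> 0"
  shows "(\<forall>R \<in> SO2. \<forall>t. euclid_motion R t ` singular_points x5 x6 y6 = singular_points x5 x6 y6)
     \<and> (\<forall>K \<in> variety x5 x6 y6. K \<in> singular_points x5 x6 y6 \<longleftrightarrow> (K $ 1 = K $ 2 \<and> K $ 2 = K $ 3))"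
proof (intro conjI ballI allI)
  fix K assume "K \<in> variety x5 x6 y6"
  then show "K \<in> singular_points x5 x6 y6 \<longleftrightarrow> (K $ 1 = K $ 2 \<and> K $ 2 = K $ 3)"
    using sing_iff[OF assms] by blast
next
  fix R t assume R: "R \<in> SO2"
  show "euclid_motion R t ` singular_points x5 x6 y6 = singular_points x5 x6 y6"
  proof
    show "euclid_motion R t ` singular_points x5 x6 y6 \<subseteq> singular_points x5 x6 y6"
      using sing_motion[OF assms R] by blast
  next
    show "singular_points x5 x6 y6 \<subseteq> euclid_motion R t ` singular_points x5 x6 y6"
    proof
      fix K assume K: "K \<in> singular_points x5 x6 y6"
      have o: "R ** transpose R = mat 1" "orthogonal_matrix R" "det R = 1"
        using R by (auto simp: SO2_def orthogonal_matrix_def)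
      have R': "transpose R \<in> SO2" using o by (simp add: SO2_def orthogonal_matrix_transpose det_transpose)
      define t' where "t' = - (transpose R *v t)"
      have "euclid_motion R t (euclid_motion (transpose R) t' K) = K"
      proof -
        have h: "R *v (transpose R *v v) = v" for v
          by (simp only: matrix_vector_mul_assoc o(1) matrix_vector_mul_lid)
        have k: "R *v (transpose R *v k + t') + t = k" for k
          unfolding t'_def by (simp only: add_uminus_conv_diff matrix_vector_mult_diff_distrib h diff_add_cancel)
        show ?thesis unfolding euclid_motion_def by (simp only: vec_lambda_beta k vec_lambda_eta)
      qed
      moreover have "euclid_motion (transpose R) t' K \<in> singular_points x5 x6 y6"
        using sing_motion[OF assms R' K] .
      ultimately show "K \<in> euclid_motion R t ` singular_points x5 x6 y6" by (metis image_eqI)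
    qed
  qed
qed
end
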